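(* Let $\{\omega_n\}$ be a set of nonzero, non-real complex numbers which is the disjoint union of $M$ branches $\omega_{m,j}=d_j(m+\xi_j)+O(m^{-\epsilon})$ ($m\ge1$, $1\le j\le M$, some $\epsilon>0$) with $d_j\in\mathbb{C}$, $\operatorname{Im}d_j<0$, $\xi_j\in\mathbb{C}$. Let $\beta>0$, $\mu\in\mathbb{C}\setminus\{0\}$ and $$\rho(\omega)=\frac{\mu\sinh\frac{\beta\omega}{2}}{\prod_n\left[1-\left(\frac{\omega}{\omega_n}\right)^2\right]}.$$ Suppose there is $s\in\mathbb{R}$ such that $\rho'(\omega)/\rho(\omega)=s/\omega+o(1/\omega)$ as $\omega\to+\infty$ along the real axis. Then $$-i\sum_{j=1}^M\frac{1}{d_j}=\frac{\beta}{2\pi}\qquad\text{and}\qquad\sum_{j=1}^M(1+2\xi_j)=s.$$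
   Context: In the physical application $s=2\Delta-d$, where $\Delta$ is the scaling dimension of the operator and $d$ the spacetime dimension. The product converges absolutely since $\sum_n|\omega_n|^{-2}<\infty$. *)

theory Defs
  imports "HOL-Analysis.Analysis" "HOL-Library.Landau_Symbols"
begin

text \<open>The branches are indexed by (m, j) with m \<ge> 1 and j < M (j = 0..M-1 stands
  for 1..M). The infinite product over all \<omega>_n is taken as the finite product over the
  branches of the infinite products over m \<ge> 1 (legitimate by absolute convergence).\<close>

definition branch_prod :: "(nat \<Rightarrow> nat \<Rightarrow> complex) \<Rightarrow> nat \<Rightarrow> complex \<Rightarrow> complex" where
  "branch_prod w M z = (\<Prod>j<M. \<Prod>m. (1 - (z / w (Suc m) j)^2))"

definition rho_fun :: "complex \<Rightarrow> real \<Rightarrow> (nat \<Rightarrow> nat \<Rightarrow> complex) \<Rightarrow> nat \<Rightarrow> complex \<Rightarrow> complex" where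
  "rho_fun \<mu> \<beta> w M z = \<mu> * sinh (of_real \<beta> * z / 2) / branch_prod w M z"

end

theory Submission
  imports Defs "HOL-Complex_Analysis.Complex_Analysis" "HOL-Real_Asymp.Real_Asymp"
begin

lemma cone_bound:
  fixes u :: complex and k R \<alpha> B :: real
  assumes k: "k \<ge> 0" and R: "R > 0" and a: "\<alpha> > 0" and im: "\<bar>Im u\<bar> \<ge> \<alpha> * R" and nb: "norm u \<le> B * R"
  shows "norm (u + of_real k) \<ge> \<alpha> / (2 * B + 1) * (k + R)"
proof -
  have iu: "\<bar>Im u\<bar> \<le> norm u" by (rule abs_Im_le_cmod)
  have "\<alpha> * R \<le> B * R" using im nb iu by linarith
  hence aB: "\<alpha> \<le> B" using R by simp
  have Bpos: "2 * B + 1 > 0" using aB a by linarith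
  show ?thesis
  proof (cases "k \<ge> 2 * norm u")
    case True
    have "norm (u + of_real k) \<ge> norm (of_real k :: complex) - norm u"
      by (metis add.commute norm_diff_ineq)
    hence n1: "norm (u + of_real k) \<ge> k / 2" using True k by simp
    have "\<alpha> * R \<le> k / 2" using im iu True by linarith
    moreover have "\<alpha> * k \<le> B * k" by (rule mult_right_mono[OF aB k])
    moreover have "\<alpha> * (k + R) = \<alpha> * k + \<alpha> * R" "(2 * B + 1) * (k / 2) = B * k + k / 2"
      by (simp_all add: algebra_simps)
    ultimately have "\<alpha> * (k + R) \<le> (2 * B + 1) * (k / 2)" by linarith
    hence "\<alpha> / (2 * B + 1) * (k + R) \<le> k / 2" using Bpos
      by (simp add: field_simps)
    thus ?thesis using n1 by linarith
  next
    case False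
    have "\<bar>Im (u + of_real k)\<bar> \<le> norm (u + of_real k)" by (rule abs_Im_le_cmod)
    hence n1: "norm (u + of_real k) \<ge> \<alpha> * R" using im by simp
    have "k + R \<le> (2 * B + 1) * R" using False nb by (simp add: algebra_simps)
    hence "\<alpha> * (k + R) \<le> \<alpha> * ((2 * B + 1) * R)" using a by simp
    hence "\<alpha> * (k + R) \<le> (2 * B + 1) * (\<alpha> * R)" by (simp add: algebra_simps)
    hence "\<alpha> / (2 * B + 1) * (k + R) \<le> \<alpha> * R" using Bpos
      by (simp add: field_simps)
    thus ?thesis using n1 by linarith
  qed
qed

lemma shift_bound:
  fixes q c :: complex and x cm :: real and k :: nat
  assumes q: "Im q \<noteq> 0" and c: "norm c \<le> cm" and x: "x \<ge> 1" "x \<ge> 2 * cm / \<bar>Im q\<bar>"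
  shows "norm (of_real x * q + c + of_nat k) \<ge> (\<bar>Im q\<bar> / 2) / (2 * (2 * norm q) + 1) * (real k + x)"
proof -
  have aq: "\<bar>Im q\<bar> > 0" using q by simp
  have cm0: "cm \<ge> 0" using c norm_ge_zero order_trans by blast
  have xq: "x * \<bar>Im q\<bar> \<ge> 2 * cm" using x(2) aq by (simp add: field_simps)
  have iq: "\<bar>Im q\<bar> \<le> norm q" by (rule abs_Im_le_cmod)
  have "\<bar>Im c\<bar> \<le> cm" using abs_Im_le_cmod c order_trans by blast
  moreover have e1: "\<bar>x * Im q\<bar> = x * \<bar>Im q\<bar>" using x by (simp add: abs_mult)
  moreover have "\<bar>x * Im q\<bar> - \<bar>- Im c\<bar> \<le> \<bar>x * Im q - - Im c\<bar>" by (rule abs_triangle_ineq2)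
  ultimately have "\<bar>x * Im q + Im c\<bar> \<ge> (\<bar>Im q\<bar> / 2) * x" using xq
    by (simp add: mult.commute)
  hence im: "\<bar>Im (of_real x * q + c)\<bar> \<ge> (\<bar>Im q\<bar> / 2) * x" by simp
  have "norm (of_real x * q + c) \<le> x * norm q + cm"
    using norm_triangle_ineq[of "of_real x * q" c] c x by (simp add: norm_mult)
  also have "\<dots> \<le> (2 * norm q) * x"
  proof -
    have "x * \<bar>Im q\<bar> \<le> x * norm q" using iq x by simp
    thus ?thesis using xq cm0 by simp
  qed
  finally have nb: "norm (of_real x * q + c) \<le> (2 * norm q) * x" .
  have "norm ((of_real x * q + c) + of_real (real k)) \<ge> (\<bar>Im q\<bar> / 2) / (2 * (2 * norm q) + 1) * (real k + x)"
    by (rule cone_bound) (use aq x im nb in auto)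
  thus ?thesis by simp
qed

lemma sum_inv_sq:
  fixes R :: real
  assumes R: "R \<ge> 1"
  shows "summable (\<lambda>k. 1 / (real k + R)^2)" "(\<Sum>k. 1 / (real k + R)^2) \<le> 2 / R"
proof -
  define f where "f = (\<lambda>n. 1 / (real n + R - 1/2))"
  have "f \<longlonglongrightarrow> 0" unfolding f_def by real_asymp
  hence tel: "(\<lambda>n. f n - f (Suc n)) sums (f 0 - 0)" by (rule telescope_sums')
  have le: "1 / (real k + R)^2 \<le> f k - f (Suc k)" for k
  proof -
    have "f k - f (Suc k) = 1 / ((real k + R)^2 - 1/4)"
      unfolding f_def using R by (simp add: field_simps power2_eq_square)
    moreover have "(real k + R)^2 - 1/4 > 0"
    proof -
      have "1 \<le> real k + R" using R by simp
      hence "1 \<le> (real k + R)^2" by (rule one_le_power)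
      thus ?thesis by linarith
    qed
    ultimately show ?thesis by (simp add: frac_le)
  qed
  show s: "summable (\<lambda>k. 1 / (real k + R)^2)"
    by (rule summable_comparison_test[OF _ sums_summable[OF tel]]) (use le in auto)
  have "(\<Sum>k. 1 / (real k + R)^2) \<le> (\<Sum>k. f k - f (Suc k))"
    by (rule suminf_le[OF le s sums_summable[OF tel]])
  also have "\<dots> = f 0" using tel by (simp add: sums_iff)
  also have "f 0 \<le> 2 / R" using R unfolding f_def by (simp add: field_simps)
  finally show "(\<Sum>k. 1 / (real k + R)^2) \<le> 2 / R" .
qed

lemma sum_bound_sq:
  fixes D :: "nat \<Rightarrow> complex" and R C :: real
  assumes R: "R \<ge> 1" and D: "\<And>k. norm (D k) \<le> C / (real k + R)^2"
  shows "summable D" "norm (\<Sum>k. D k) \<le> C * (2 / R)"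
proof -
  have "0 \<le> C / (real 0 + R)^2" using D[of 0] norm_ge_zero order_trans by blast
  moreover have "(real 0 + R)^2 > 0" using R by simp
  ultimately have C: "C \<ge> 0" by (auto simp: zero_le_divide_iff)
  have s1: "summable (\<lambda>k. C * (1 / (real k + R)^2))"
    using summable_mult[OF sum_inv_sq(1)[OF R]] by blast
  have sn: "summable (\<lambda>k. norm (D k))"
    by (rule summable_comparison_test[OF _ s1]) (use D in auto)
  thus "summable D" by (rule summable_norm_cancel)
  have "norm (\<Sum>k. D k) \<le> (\<Sum>k. norm (D k))" by (rule summable_norm[OF sn])
  also have "\<dots> \<le> (\<Sum>k. C * (1 / (real k + R)^2))"
    by (rule suminf_le[OF _ sn s1]) (use D in auto)
  also have "\<dots> = C * (\<Sum>k. 1 / (real k + R)^2)"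
    by (rule suminf_mult[OF sum_inv_sq(1)[OF R]])
  also have "\<dots> \<le> C * (2 / R)" by (rule mult_left_mono[OF sum_inv_sq(2)[OF R] C])
  finally show "norm (\<Sum>k. D k) \<le> C * (2 / R)" .
qed

lemma Digamma_reflection:
  fixes u :: complex
  assumes u: "u \<notin> \<int>"
  shows "Digamma (1 - u) - Digamma u = of_real pi * cot (of_real pi * u)"
proof -
  have u1: "u \<notin> \<int>\<^sub>\<le>\<^sub>0" using u nonpos_Ints_subset_Ints by blast
  have u2: "1 - u \<notin> \<int>\<^sub>\<le>\<^sub>0"
  proof
    assume "1 - u \<in> \<int>\<^sub>\<le>\<^sub>0"
    hence "1 - u \<in> \<int>" using nonpos_Ints_subset_Ints by blast
    hence "1 - (1 - u) \<in> \<int>" by (intro Ints_diff) auto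
    thus False using u by simp
  qed
  have s: "sin (of_real pi * u) \<noteq> 0"
  proof
    assume "sin (of_real pi * u) = 0"
    then obtain n :: int where "of_real pi * u = of_real (n * pi)" by (auto simp: sin_eq_0)
    hence "u = of_int n" by (simp add: field_simps)
    thus False using u by auto
  qed
  have g1: "(Gamma has_field_derivative Gamma u * Digamma u) (at u)"
    by (rule has_field_derivative_Gamma[OF u1])
  have dd: "((\<lambda>z. 1 - z) has_field_derivative -1) (at u)"
    by (auto intro!: derivative_eq_intros)
  have g2: "((\<lambda>z. Gamma (1 - z)) has_field_derivative (Gamma (1 - u) * Digamma (1 - u)) * (-1)) (at u)"
    by (rule DERIV_chain2[OF has_field_derivative_Gamma[OF u2] dd])
  note d1 = DERIV_mult[OF g1 g2]
  have hs: "((\<lambda>z. sin (of_real pi * z)) has_field_derivative (cos (of_real pi * u) * of_real pi)) (at u)"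
    by (rule derivative_eq_intros refl | simp)+
  note d2 = DERIV_divide[OF DERIV_const[of "of_real pi"] hs s]
  have eqf: "(\<lambda>z::complex. Gamma z * Gamma (1 - z)) = (\<lambda>z. of_real pi / sin (of_real pi * z))"
    by (rule ext) (rule Gamma_reflection_complex)
  have d2': "((\<lambda>z::complex. Gamma z * Gamma (1 - z)) has_field_derivative
     ((0 * sin (of_real pi * u) - of_real pi * (cos (of_real pi * u) * of_real pi)) /
      (sin (of_real pi * u) * sin (of_real pi * u)))) (at u)"
    unfolding eqf by (rule d2)
  note E = DERIV_unique[OF d1 d2']
  have G: "Gamma u * Gamma (1 - u) = of_real pi / sin (of_real pi * u)" by (rule Gamma_reflection_complex)
  define S where "S = sin (of_real pi * u)"
  define C where "C = cos (of_real pi * u)"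
  define P where "P = (of_real pi :: complex)"
  have P0: "P \<noteq> 0" by (simp add: P_def)
  have S0: "S \<noteq> 0" using s by (simp add: S_def)
  have E': "Gamma u * Gamma (1 - u) * (Digamma u - Digamma (1 - u)) = - (P * P * C) / (S * S)"
    using E unfolding S_def C_def P_def by (simp add: algebra_simps)
  hence "(P / S) * (Digamma u - Digamma (1 - u)) = - (P * P * C) / (S * S)"
    using G unfolding S_def P_def by simp
  note h = this
  have "Digamma u - Digamma (1 - u) = (S / P) * ((P / S) * (Digamma u - Digamma (1 - u)))"
    using P0 S0 by simp
  also have "\<dots> = (S / P) * (- (P * P * C) / (S * S))" by (simp only: h)
  also have "\<dots> = - (P * (C / S))" using P0 S0 by (simp add: field_simps)
  finally have X: "Digamma u - Digamma (1 - u) = - (P * (C / S))" .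
  show ?thesis using X unfolding cot_def P_def C_def S_def by (simp add: algebra_simps)
qed

lemma Digamma_diff_sums:
  fixes a b :: complex
  assumes "a \<noteq> 0" "b \<noteq> 0"
  shows "(\<lambda>k. 1 / (a + of_nat k) - 1 / (b + of_nat k)) sums (Digamma b - Digamma a)"
proof -
  have sa: "(\<lambda>k. inverse (of_nat (Suc k)) - inverse (a + of_nat k)) sums (Digamma a + euler_mascheroni)"
    using summable_Digamma[OF assms(1)] by (simp add: Digamma_def summable_sums)
  have sb: "(\<lambda>k. inverse (of_nat (Suc k)) - inverse (b + of_nat k)) sums (Digamma b + euler_mascheroni)"
    using summable_Digamma[OF assms(2)] by (simp add: Digamma_def summable_sums)
  from sums_diff[OF sb sa] show ?thesis by (simp add: divide_inverse)
qed

lemma cot_alg: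
  fixes p :: complex
  assumes "p \<noteq> 0" "p * p \<noteq> 1"
  shows "((p + 1/p)/2) / ((p - 1/p)/(2*\<i>)) + \<i> = 2*\<i>*(p*p)/(p*p - 1)"
proof -
  have a: "p - 1/p = (p*p - 1)/p" "p + 1/p = (p*p+1)/p" using assms(1) by (simp_all add: field_simps)
  have b: "p * p - 1 \<noteq> 0" using assms(2) by simp
  show ?thesis unfolding a using assms(1) b by (simp add: field_simps)
qed

lemma cot_bound:
  fixes q \<xi> :: complex and x :: real
  defines "E \<equiv> (\<lambda>x::real. exp (- 2 * pi * (x * Im q - Im \<xi>)))"
  assumes x: "x > 0" "E x \<le> 1/2"
  shows "norm (of_real x * (cot (of_real pi * (of_real x * q - \<xi>)) + \<i>)) \<le> 4 * x * E x"
  proof -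
  define w where "w = of_real pi * (of_real x * q - \<xi>)"
  define p where "p = exp (\<i> * w)"
  have p0: "p \<noteq> 0" by (simp add: p_def)
  have np: "norm (p^2) = E x"
  proof -
    have "p^2 = exp (2 * (\<i> * w))" unfolding p_def by (rule exp_double[symmetric])
    moreover have "Re (2 * (\<i> * w)) = - 2 * pi * (x * Im q - Im \<xi>)" by (simp add: w_def)
    ultimately show ?thesis by (simp add: E_def norm_exp_eq_Re)
  qed
  have p1: "p^2 \<noteq> 1" using np x by auto
  have ep: "exp (- (\<i> * w)) = 1 / p" by (simp add: p_def exp_minus divide_inverse)
  have pp: "p * p \<noteq> 1" using p1 by (simp add: power2_eq_square)
  have np': "norm (p * p) = E x" using np by (simp add: power2_eq_square)
  have "cot w + \<i> = 2 * \<i> * (p * p) / (p * p - 1)"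
  proof -
    have sw: "sin w = (p - 1/p) / (2 * \<i>)" and cw: "cos w = (p + 1/p) / 2"
      by (simp_all add: sin_exp_eq cos_exp_eq p_def[symmetric] ep)
    show ?thesis unfolding cot_def sw cw by (rule cot_alg[OF p0 pp])
  qed
  moreover have n1: "norm (p * p - 1) \<ge> 1/2"
  proof -
    have "norm (1::complex) - norm (p * p) \<le> norm (1 - p * p)" by (rule norm_triangle_ineq2)
    thus ?thesis using np' x by (simp add: norm_minus_commute)
  qed
  ultimately have "norm (cot w + \<i>) = 2 * E x / norm (p * p - 1)"
    using np' by (simp add: norm_divide norm_mult)
  also have "\<dots> \<le> 2 * E x / (1/2)"
    by (rule divide_left_mono[OF n1]) (use n1 in \<open>auto simp: E_def\<close>)
  finally have "norm (cot w + \<i>) \<le> 4 * E x" by simp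
  thus ?thesis using x unfolding w_def by (simp add: norm_mult mult.assoc)
qed

lemma cot_limit:
  fixes q \<xi> :: complex
  assumes q: "Im q > 0"
  shows "((\<lambda>x::real. of_real x * (cot (of_real pi * (of_real x * q - \<xi>)) + \<i>)) \<longlongrightarrow> 0) at_top"
proof -
  define E where "E = (\<lambda>x::real. exp (- 2 * pi * (x * Im q - Im \<xi>)))"
  have bound: "norm (of_real x * (cot (of_real pi * (of_real x * q - \<xi>)) + \<i>)) \<le> 4 * x * E x"
    if x: "x > 0" "E x \<le> 1/2" for x
    using cot_bound[of x q \<xi>] x unfolding E_def by simp
  have lim: "((\<lambda>x. 4 * x * E x) \<longlongrightarrow> 0) at_top" unfolding E_def using q by real_asymp
  have lim2: "(E \<longlongrightarrow> 0) at_top" unfolding E_def using q by real_asymp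
  have ev: "eventually (\<lambda>x. norm (of_real x * (cot (of_real pi * (of_real x * q - \<xi>)) + \<i>)) \<le> 4 * x * E x) at_top"
  proof -
    have "eventually (\<lambda>x. E x < 1/2) at_top" by (rule order_tendstoD(2)[OF lim2]) simp
    thus ?thesis using eventually_gt_at_top[of 0]
      by eventually_elim (use bound in auto)
  qed
  show ?thesis
    by (rule Lim_null_comparison[OF ev lim])
qed

lemma T_alg:
  fixes A B Y \<xi> :: complex
  assumes "A \<noteq> 0" "B \<noteq> 0" "Y \<noteq> 0" "Y + 1 \<noteq> 0" "A = Y - \<xi>" "B = Y + 1 + \<xi>"
  shows "1 / A - 1 / B - (1 + 2 * \<xi>) * (1 / Y - 1 / (Y + 1)) = (1 + 2 * \<xi>) * (\<xi> * (1 + \<xi>)) / (A * B * Y * (Y + 1))"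
proof -
  have a: "Y - \<xi> \<noteq> 0" "Y + 1 + \<xi> \<noteq> 0" using assms by auto
  have "1 / (Y - \<xi>) - 1 / (Y + 1 + \<xi>) - (1 + 2 * \<xi>) * (1 / Y - 1 / (Y + 1))
     = (1 + 2 * \<xi>) * (\<xi> * (1 + \<xi>)) / ((Y - \<xi>) * (Y + 1 + \<xi>) * Y * (Y + 1))"
    using a assms(3,4) by (simp add: divide_simps) (simp add: algebra_simps)
  thus ?thesis using assms(5,6) by simp
qed

lemma quad_bound:
  fixes A B Y Z N :: complex and m :: real
  assumes m: "m > 0" and "norm A \<ge> m" "norm B \<ge> m" "norm Y \<ge> m" "norm Z \<ge> m"
  shows "norm (N / (A * B * Y * Z)) \<le> norm N / m ^ 4"
proof -
  have "m * m \<le> norm A * norm B" using assms by (intro mult_mono) auto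
  moreover have "m * m \<le> norm Y * norm Z" using assms by (intro mult_mono) auto
  ultimately have "(m * m) * (m * m) \<le> (norm A * norm B) * (norm Y * norm Z)"
    using assms by (intro mult_mono) auto
  hence le: "m ^ 4 \<le> norm (A * B * Y * Z)" by (simp add: norm_mult power4_eq_xxxx mult_ac)
  have "0 < m ^ 4" using m by simp
  hence np: "norm (A * B * Y * Z) > 0" using le by linarith
  have "norm (N / (A * B * Y * Z)) = norm N / norm (A * B * Y * Z)" by (simp add: norm_divide)
  also have "\<dots> \<le> norm N / m ^ 4" by (rule divide_left_mono[OF le]) (use m np in auto)
  finally show ?thesis .
qed

lemma Digamma_asymp:
  fixes q \<xi> :: complex
  assumes q: "Im q > 0"
  shows "((\<lambda>x::real. (of_real x * q) * (Digamma (of_real x * q + 1 + \<xi>) - Digamma (of_real x * q - \<xi>)))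
           \<longlongrightarrow> 1 + 2 * \<xi>) at_top"
proof -
  define cm where "cm = 2 + norm \<xi>"
  define c0 where "c0 = (\<bar>Im q\<bar> / 2) / (2 * (2 * norm q) + 1)"
  define X0 where "X0 = max 1 (2 * cm / \<bar>Im q\<bar>)"
  define K where "K = norm ((1 + 2 * \<xi>) * (\<xi> * (1 + \<xi>))) / c0 ^ 4"
  have q0: "Im q \<noteq> 0" using q by simp
  have "0 < 2 * (2 * norm q) + 1" using norm_ge_zero[of q] by linarith
  hence c0: "c0 > 0" unfolding c0_def using q by (intro divide_pos_pos) auto
  have K0: "K \<ge> 0" unfolding K_def by simp
  have key: "norm ((of_real x * q) * (Digamma (of_real x * q + 1 + \<xi>) - Digamma (of_real x * q - \<xi>)) - (1 + 2 * \<xi>))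
      \<le> norm q * (2 * K) / x ^ 2" if x: "x \<ge> X0" for x
  proof -
    have x1: "x \<ge> 1" "x \<ge> 2 * cm / \<bar>Im q\<bar>" using x unfolding X0_def by auto
    define z where "z = of_real x * q"
    define a where "a = z - \<xi>"
    define b where "b = z + 1 + \<xi>"
    have sb: "norm (z + c + of_nat k) \<ge> c0 * (real k + x)" if "norm c \<le> cm" for c k
      unfolding z_def c0_def by (rule shift_bound[OF q0 that x1])
    have ba: "norm (a + of_nat k) \<ge> c0 * (real k + x)" for k
      using sb[of "- \<xi>" k] unfolding a_def cm_def by simp
    have bb: "norm (b + of_nat k) \<ge> c0 * (real k + x)" for k
    proof -
      have "norm (1 + \<xi>) \<le> cm" unfolding cm_def using norm_triangle_ineq[of 1 \<xi>] by simp
      thus ?thesis using sb[of "1 + \<xi>" k] unfolding b_def by (simp add: add_ac)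
    qed
    have bz: "norm (z + of_nat k) \<ge> c0 * (real k + x)" for k
      using sb[of 0 k] unfolding cm_def by simp
    have bz1: "norm (z + of_nat k + 1) \<ge> c0 * (real k + x)" for k
      using sb[of 1 k] unfolding cm_def by (simp add: add_ac)
    have pos: "c0 * (real k + x) > 0" for k using c0 x1 by simp
    have nza: "a + of_nat k \<noteq> 0" for k using ba[of k] pos[of k] by auto
    have nzb: "b + of_nat k \<noteq> 0" for k using bb[of k] pos[of k] by auto
    have nzz: "z + of_nat k \<noteq> 0" for k using bz[of k] pos[of k] by auto
    have nzz1: "z + of_nat k + 1 \<noteq> 0" for k using bz1[of k] pos[of k] by auto
    have z0: "z \<noteq> 0" using nzz[of 0] by simp
    define T where "T = (\<lambda>k. 1 / (a + of_nat k) - 1 / (b + of_nat k)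
        - (1 + 2 * \<xi>) * (1 / (z + of_nat k) - 1 / (z + of_nat k + 1)))"
    have S1: "(\<lambda>k. 1 / (a + of_nat k) - 1 / (b + of_nat k)) sums (Digamma b - Digamma a)"
      using Digamma_diff_sums[of a b] nza[of 0] nzb[of 0] by simp
    have "(\<lambda>n. inverse (z + of_nat n)) \<longlonglongrightarrow> 0"
      by (intro filterlim_compose[OF tendsto_inverse_0] tendsto_add_filterlim_at_infinity[OF tendsto_const] tendsto_of_nat)
    from telescope_sums'[OF this]
    have S2: "(\<lambda>k. 1 / (z + of_nat k) - 1 / (z + of_nat k + 1)) sums (1 / z)"
      by (simp add: divide_inverse add_ac)
    have ST: "T sums ((Digamma b - Digamma a) - (1 + 2 * \<xi>) * (1 / z))"
      unfolding T_def by (intro sums_diff S1 sums_mult S2)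
    have Tb: "norm (T k) \<le> (K / x^2) / (real k + x)^2" for k
    proof -
      have "T k = (1 + 2 * \<xi>) * (\<xi> * (1 + \<xi>)) / ((a + of_nat k) * (b + of_nat k) * (z + of_nat k) * (z + of_nat k + 1))"
        unfolding T_def by (rule T_alg) (use nza nzb nzz nzz1 in \<open>auto simp: a_def b_def\<close>)
      also have "norm \<dots> \<le> norm ((1 + 2 * \<xi>) * (\<xi> * (1 + \<xi>))) / (c0 * (real k + x)) ^ 4"
        by (rule quad_bound[OF pos ba bb bz bz1])
      also have "\<dots> = K / (real k + x) ^ 4" unfolding K_def by (simp add: power_mult_distrib)
      also have "\<dots> \<le> (K / x^2) / (real k + x)^2"
      proof -
        have "x^2 * (real k + x)^2 \<le> (real k + x)^2 * (real k + x)^2"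
          using x1 by (intro mult_right_mono power_mono) auto
        hence "x^2 * (real k + x)^2 \<le> (real k + x) ^ 4" by (simp add: power4_eq_xxxx power2_eq_square mult_ac)
        moreover have "x^2 * (real k + x)^2 > 0" using x1 by simp
        ultimately have "K / (real k + x) ^ 4 \<le> K / (x^2 * (real k + x)^2)"
          using K0 by (intro divide_left_mono) (auto intro!: mult_pos_pos)
        thus ?thesis by simp
      qed
      finally show ?thesis .
    qed
    have nT: "norm (\<Sum>k. T k) \<le> (K / x^2) * (2 / x)"
      by (rule sum_bound_sq(2)[OF x1(1) Tb])
    have "(of_real x * q) * (Digamma (of_real x * q + 1 + \<xi>) - Digamma (of_real x * q - \<xi>)) - (1 + 2 * \<xi>)
        = z * (\<Sum>k. T k)"
      using sums_unique[OF ST] z0 unfolding a_def b_def z_def by (simp add: field_simps)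
    also have "norm \<dots> \<le> (x * norm q) * ((K / x^2) * (2 / x))"
      unfolding norm_mult z_def using x1 nT by (intro mult_mono) auto
    also have "\<dots> = norm q * (2 * K) / x ^ 2" using x1 by (simp add: field_simps power2_eq_square)
    finally show ?thesis .
  qed
  have lim0: "((\<lambda>x::real. norm q * (2 * K) / x ^ 2) \<longlongrightarrow> 0) at_top" by real_asymp
  have "((\<lambda>x::real. (of_real x * q) * (Digamma (of_real x * q + 1 + \<xi>) - Digamma (of_real x * q - \<xi>)) - (1 + 2 * \<xi>)) \<longlongrightarrow> 0) at_top"
    by (rule Lim_null_comparison[OF _ lim0]) (rule eventually_mono[OF eventually_ge_at_top[of X0] key])
  hence "((\<lambda>x::real. (of_real x * q) * (Digamma (of_real x * q + 1 + \<xi>) - Digamma (of_real x * q - \<xi>)) - (1 + 2 * \<xi>) + (1 + 2 * \<xi>)) \<longlongrightarrow> 0 + (1 + 2 * \<xi>)) at_top"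
    by (intro tendsto_add tendsto_const)
  thus ?thesis by simp
qed

lemma tail_lemma:
  fixes D :: "real \<Rightarrow> nat \<Rightarrow> complex" and e :: "nat \<Rightarrow> real" and G X0 :: real
  assumes e: "e \<longlonglongrightarrow> 0" and e0: "\<And>k. e k \<ge> 0" and G: "G \<ge> 0"
    and bound: "\<And>x k. x \<ge> X0 \<Longrightarrow> norm (D x k) \<le> G * e k / (real k + x)^2"
  shows "((\<lambda>x. of_real x * (\<Sum>k. D x k)) \<longlongrightarrow> 0) at_top"
proof -
  from e have "Bseq e" by (rule convergent_imp_Bseq[OF convergentI])
  then obtain Eb where Eb: "Eb > 0" "\<And>k. norm (e k) \<le> Eb" by (auto simp: Bseq_def)
  have Eb': "e k \<le> Eb" for k using Eb(2)[of k] e0[of k] by simp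
  show ?thesis
  proof (rule tendstoI)
    fix \<epsilon> :: real assume \<epsilon>: "\<epsilon> > 0"
    define \<epsilon>' where "\<epsilon>' = \<epsilon> / (4 * G + 4)"
    have \<epsilon>': "\<epsilon>' > 0" unfolding \<epsilon>'_def using \<epsilon> G by simp
    from order_tendstoD(2)[OF e \<epsilon>'] obtain N where N: "\<And>k. k \<ge> N \<Longrightarrow> e k < \<epsilon>'"
      by (auto simp: eventually_sequentially)
    define X1 where "X1 = max (max X0 1) (2 * real N * G * Eb / \<epsilon> + 1)"
    have "eventually (\<lambda>x. x \<ge> X1) at_top" by (rule eventually_ge_at_top)
    thus "eventually (\<lambda>x. dist (of_real x * (\<Sum>k. D x k)) 0 < \<epsilon>) at_top"
    proof eventually_elim
      case (elim x)
      have x0: "x \<ge> X0" "x \<ge> 1" "x \<ge> 2 * real N * G * Eb / \<epsilon> + 1" using elim unfolding X1_def by auto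
      have bd: "norm (D x k) \<le> (G * Eb) / (real k + x)^2" for k
      proof -
        have "G * e k \<le> G * Eb" using Eb' G by (intro mult_left_mono) auto
        hence "G * e k / (real k + x)^2 \<le> G * Eb / (real k + x)^2" by (intro divide_right_mono) auto
        thus ?thesis using bound[OF x0(1), of k] by linarith
      qed
      have sm: "summable (D x)" by (rule sum_bound_sq(1)[OF x0(2) bd])
      have split: "(\<Sum>k. D x k) = (\<Sum>k. D x (k + N)) + (\<Sum>k<N. D x k)"
        by (rule suminf_split_initial_segment[OF sm])
      have tl: "norm (\<Sum>k. D x (k + N)) \<le> (G * \<epsilon>') * (2 / x)"
      proof (rule sum_bound_sq(2)[OF x0(2)])
        fix k
        have "e (k + N) \<le> \<epsilon>'" using N[of "k + N"] by simp
        hence "G * e (k + N) \<le> G * \<epsilon>'" using G by (intro mult_left_mono) auto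
        moreover have "(real k + x)^2 \<le> (real (k + N) + x)^2" using x0 by (intro power_mono) auto
        moreover have "(real k + x)^2 > 0" using x0 by simp
        ultimately have "G * e (k + N) / (real (k + N) + x)^2 \<le> G * \<epsilon>' / (real k + x)^2"
          using G \<epsilon>' by (intro frac_le) auto
        thus "norm (D x (k + N)) \<le> G * \<epsilon>' / (real k + x)^2"
          using bound[OF x0(1), of "k + N"] by linarith
      qed
      have hd: "norm (\<Sum>k<N. D x k) \<le> real N * (G * Eb / x^2)"
      proof -
        have "norm (\<Sum>k<N. D x k) \<le> (\<Sum>k<N. norm (D x k))" by (rule norm_sum)
        also have "\<dots> \<le> (\<Sum>k<N. G * Eb / x^2)"
        proof (rule sum_mono)
          fix k
          have "x^2 \<le> (real k + x)^2" using x0 by (intro power_mono) auto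
          hence "G * Eb / (real k + x)^2 \<le> G * Eb / x^2" using x0 G Eb by (intro divide_left_mono) auto
          thus "norm (D x k) \<le> G * Eb / x^2" using bd[of k] by linarith
        qed
        finally show ?thesis by simp
      qed
      have "norm (of_real x * (\<Sum>k. D x k)) = x * norm (\<Sum>k. D x k)" using x0 by (simp add: norm_mult)
      also have "\<dots> \<le> x * ((G * \<epsilon>') * (2 / x) + real N * (G * Eb / x^2))"
        using tl hd x0 split norm_triangle_ineq[of "\<Sum>k. D x (k + N)" "\<Sum>k<N. D x k"]
        by (intro mult_left_mono) auto
      also have "\<dots> = 2 * G * \<epsilon>' + real N * G * Eb / x" using x0 by (simp add: field_simps power2_eq_square)
      also have "2 * G * \<epsilon>' < \<epsilon> / 2" unfolding \<epsilon>'_def using \<epsilon> G by (simp add: field_simps)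
      also have "real N * G * Eb / x \<le> \<epsilon> / 2"
      proof -
        have "2 * real N * G * Eb \<le> \<epsilon> * x"
        proof -
          have "2 * real N * G * Eb / \<epsilon> \<le> x" using x0 by linarith
          thus ?thesis using \<epsilon> by (simp add: field_simps)
        qed
        thus ?thesis using x0 by (simp add: field_simps)
      qed
      finally show ?case by simp
    qed
  qed
qed

lemma diff_bound:
  fixes w v x e :: complex and m :: real
  assumes "w = v + e" "m > 0" "norm (w - x) \<ge> m" "norm (v - x) \<ge> m"
  shows "norm (1 / (w - x) - 1 / (v - x)) \<le> norm e / m^2"
proof -
  have nz: "w - x \<noteq> 0" "v - x \<noteq> 0" using assms by auto
  have "1 / (w - x) - 1 / (v - x) = - e / ((w - x) * (v - x))"
    using nz assms(1) by (simp add: field_simps)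
  hence "norm (1 / (w - x) - 1 / (v - x)) = norm e / (norm (w - x) * norm (v - x))"
    by (simp add: norm_divide norm_mult)
  also have "\<dots> \<le> norm e / (m * m)"
    using assms by (intro divide_left_mono mult_mono) (auto intro!: mult_pos_pos)
  finally show ?thesis by (simp add: power2_eq_square)
qed

lemma branch_asymp:
  fixes w :: "nat \<Rightarrow> complex" and d \<xi> :: complex
  assumes d: "Im d < 0"
    and e: "(\<lambda>m. w m - d * (of_nat m + \<xi>)) \<longlonglongrightarrow> 0"
  shows "((\<lambda>x::real. of_real x * ((\<Sum>k. 1 / (w (Suc k) - of_real x) - 1 / (w (Suc k) + of_real x))
            - \<i> * of_real pi / d)) \<longlongrightarrow> 1 + 2 * \<xi>) at_top"
proof -
  define q where "q = 1 / d"
  have d0: "d \<noteq> 0" using d by auto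
  have "(Re d)^2 + (Im d)^2 > 0" using d by (simp add: sum_power2_gt_zero_iff)
  hence q: "Im q > 0" unfolding q_def using d by (simp add: Im_divide divide_neg_pos)
  have q0: "Im q \<noteq> 0" using q by simp
  define ee where "ee = (\<lambda>m. w m - d * (of_nat m + \<xi>))"
  from e have "Bseq ee" unfolding ee_def by (rule convergent_imp_Bseq[OF convergentI])
  then obtain Eb where Eb: "Eb > 0" "\<And>k. norm (ee k) \<le> Eb" by (auto simp: Bseq_def)
  define cm where "cm = 1 + norm \<xi>"
  define c0 where "c0 = (\<bar>Im q\<bar> / 2) / (2 * (2 * norm q) + 1)"
  have "0 < 2 * (2 * norm q) + 1" using norm_ge_zero[of q] by linarith
  hence c0: "c0 > 0" unfolding c0_def using q by (intro divide_pos_pos) auto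
  define m0 where "m0 = norm d * c0"
  have m0: "m0 > 0" unfolding m0_def using c0 d0 by simp
  define X0 where "X0 = max (max 1 (2 * cm / \<bar>Im q\<bar>)) (2 * Eb / m0)"
  define A where "A = (\<lambda>x::real. \<lambda>k::nat. 1 / (d * (of_nat (Suc k) + \<xi>) - of_real x) - 1 / (d * (of_nat (Suc k) + \<xi>) + of_real x))"
  define D where "D = (\<lambda>x::real. \<lambda>k::nat. (1 / (w (Suc k) - of_real x) - 1 / (w (Suc k) + of_real x)) - A x k)"
  have cmb: "norm (1 + \<xi>) \<le> cm" unfolding cm_def using norm_triangle_ineq[of 1 \<xi>] by simp
  have facts: "norm (d * (of_nat (Suc k) + \<xi>) - of_real x) \<ge> m0 * (real k + x) \<and>
               norm (d * (of_nat (Suc k) + \<xi>) + of_real x) \<ge> m0 * (real k + x) \<and>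
               norm (w (Suc k) - of_real x) \<ge> m0 / 2 * (real k + x) \<and>
               norm (w (Suc k) + of_real x) \<ge> m0 / 2 * (real k + x)"
    if x: "x \<ge> X0" for x k
  proof -
    have x1: "x \<ge> 1" "x \<ge> 2 * cm / \<bar>Im q\<bar>" "x \<ge> 2 * Eb / m0" using x unfolding X0_def by auto
    have xd: "of_real x = d * (of_real x * q)" unfolding q_def using d0 by simp
    have b1: "norm (of_real x * (- q) + (1 + \<xi>) + of_nat k) \<ge> c0 * (real k + x)"
      using shift_bound[of "- q" "1 + \<xi>" cm x k] q0 cmb x1 unfolding c0_def by simp
    have b2: "norm (of_real x * q + (1 + \<xi>) + of_nat k) \<ge> c0 * (real k + x)"
      using shift_bound[of "q" "1 + \<xi>" cm x k] q0 cmb x1 unfolding c0_def by simp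
    have e1: "d * (of_nat (Suc k) + \<xi>) - of_real x = d * (of_real x * (- q) + (1 + \<xi>) + of_nat k)"
      by (subst xd) (simp add: algebra_simps)
    have e2: "d * (of_nat (Suc k) + \<xi>) + of_real x = d * (of_real x * q + (1 + \<xi>) + of_nat k)"
      by (subst xd) (simp add: algebra_simps)
    have v1: "norm (d * (of_nat (Suc k) + \<xi>) - of_real x) \<ge> m0 * (real k + x)"
      unfolding e1 norm_mult m0_def using b1 by (simp add: mult.assoc mult_left_mono)
    have v2: "norm (d * (of_nat (Suc k) + \<xi>) + of_real x) \<ge> m0 * (real k + x)"
      unfolding e2 norm_mult m0_def using b2 by (simp add: mult.assoc mult_left_mono)
    have Ebx: "Eb \<le> m0 / 2 * (real k + x)"
    proof -
      have "Eb \<le> m0 / 2 * x" using x1(3) m0 by (simp add: field_simps)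
      also have "\<dots> \<le> m0 / 2 * (real k + x)" using m0 by (intro mult_left_mono) auto
      finally show ?thesis .
    qed
    have wv: "w (Suc k) = d * (of_nat (Suc k) + \<xi>) + ee (Suc k)" unfolding ee_def by simp
    have "norm (w (Suc k) - of_real x) \<ge> norm (d * (of_nat (Suc k) + \<xi>) - of_real x) - norm (ee (Suc k))"
    proof -
      have eq: "w (Suc k) - of_real x = (d * (of_nat (Suc k) + \<xi>) - of_real x) + ee (Suc k)"
        unfolding wv by (simp add: algebra_simps)
      show ?thesis unfolding eq by (rule norm_diff_ineq)
    qed
    hence w1: "norm (w (Suc k) - of_real x) \<ge> m0 / 2 * (real k + x)" using v1 Ebx Eb(2)[of "Suc k"] by simp
    have "norm (w (Suc k) + of_real x) \<ge> norm (d * (of_nat (Suc k) + \<xi>) + of_real x) - norm (ee (Suc k))"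
    proof -
      have eq: "w (Suc k) + of_real x = (d * (of_nat (Suc k) + \<xi>) + of_real x) + ee (Suc k)"
        unfolding wv by (simp add: algebra_simps)
      show ?thesis unfolding eq by (rule norm_diff_ineq)
    qed
    hence w2: "norm (w (Suc k) + of_real x) \<ge> m0 / 2 * (real k + x)" using v2 Ebx Eb(2)[of "Suc k"] by simp
    show ?thesis using v1 v2 w1 w2 by simp
  qed
  define G where "G = 2 / (m0 / 2)^2"
  have Dbound: "norm (D x k) \<le> G * norm (ee (Suc k)) / (real k + x)^2" if x: "x \<ge> X0" for x k
  proof -
    have x1: "x \<ge> 1" using x unfolding X0_def by auto
    have pos: "m0 / 2 * (real k + x) > 0" using m0 x1 by simp
    have le1: "m0 / 2 * (real k + x) \<le> m0 * (real k + x)" using pos by simp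
    have wv: "w (Suc k) = d * (of_nat (Suc k) + \<xi>) + ee (Suc k)" unfolding ee_def by simp
    have n1: "norm (1 / (w (Suc k) - of_real x) - 1 / (d * (of_nat (Suc k) + \<xi>) - of_real x)) \<le> norm (ee (Suc k)) / (m0 / 2 * (real k + x))^2"
      by (rule diff_bound[OF wv pos]) (use facts[OF x, of k] le1 in auto)
    have n2: "norm (1 / (w (Suc k) - (- of_real x)) - 1 / (d * (of_nat (Suc k) + \<xi>) - (- of_real x))) \<le> norm (ee (Suc k)) / (m0 / 2 * (real k + x))^2"
      by (rule diff_bound[OF wv pos]) (use facts[OF x, of k] le1 in auto)
    have "D x k = (1 / (w (Suc k) - of_real x) - 1 / (d * (of_nat (Suc k) + \<xi>) - of_real x))
               - (1 / (w (Suc k) - (- of_real x)) - 1 / (d * (of_nat (Suc k) + \<xi>) - (- of_real x)))"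
      unfolding D_def A_def by (simp add: algebra_simps)
    also have "norm \<dots> \<le> norm (ee (Suc k)) / (m0 / 2 * (real k + x))^2 + norm (ee (Suc k)) / (m0 / 2 * (real k + x))^2"
      using norm_triangle_ineq4 n1 n2 by (smt (verit))
    also have "\<dots> = G * norm (ee (Suc k)) / (real k + x)^2"
    proof -
      have p: "(m0 / 2 * (real k + x))^2 = (m0 / 2)^2 * (real k + x)^2" by (rule power_mult_distrib)
      have "(real k + x)^2 > 0" using x1 by simp
      thus ?thesis unfolding G_def p using m0 by (simp add: divide_simps)
    qed
    finally show ?thesis .
  qed
  have G0: "G \<ge> 0" unfolding G_def by simp
  have ee0: "(\<lambda>k. norm (ee (Suc k))) \<longlonglongrightarrow> 0"
    using tendsto_norm_zero[OF LIMSEQ_Suc[OF e[folded ee_def]]] .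
  have limD: "((\<lambda>x. of_real x * (\<Sum>k. D x k)) \<longlongrightarrow> 0) at_top"
    by (rule tail_lemma[OF ee0 _ G0 Dbound]) auto
  have model: "of_real x * (\<Sum>k. 1 / (w (Suc k) - of_real x) - 1 / (w (Suc k) + of_real x)) - of_real x * (\<i> * of_real pi / d)
      = of_real x * (\<Sum>k. D x k) + (of_real x * q) * (Digamma (of_real x * q + 1 + \<xi>) - Digamma (of_real x * q - \<xi>))
        - of_real pi * q * (of_real x * (cot (of_real pi * (of_real x * q - \<xi>)) + \<i>))"
    if x: "x \<ge> X0" for x
  proof -
    have x1: "x \<ge> 1" "x \<ge> 2 * cm / \<bar>Im q\<bar>" using x unfolding X0_def by auto
    define z where "z = of_real x * q"
    define a where "a = 1 + \<xi> - z"
    define b where "b = 1 + \<xi> + z"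
    have xz: "of_real x = d * z" unfolding z_def q_def using d0 by simp
    have Aeq: "A x k = (1 / d) * (1 / (a + of_nat k) - 1 / (b + of_nat k))" for k
    proof -
      have e1: "d * (of_nat (Suc k) + \<xi>) - of_real x = d * (a + of_nat k)"
        unfolding a_def xz by (simp add: algebra_simps)
      have e2: "d * (of_nat (Suc k) + \<xi>) + of_real x = d * (b + of_nat k)"
        unfolding b_def xz by (simp add: algebra_simps)
      have i: "1 / (d * u) = (1 / d) * (1 / u)" for u by simp
      show ?thesis unfolding A_def e1 e2 i by (simp add: right_diff_distrib)
    qed
    have an: "a \<noteq> 0"
    proof -
      have "norm (d * (of_nat (Suc 0) + \<xi>) - of_real x) \<ge> m0 * (real 0 + x)" using facts[OF x, of 0] by simp
      moreover have "d * (of_nat (Suc 0) + \<xi>) - of_real x = d * a" unfolding a_def xz by (simp add: algebra_simps)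
      moreover have "m0 * x > 0" using m0 x1 by simp
      ultimately show ?thesis by auto
    qed
    have bn: "b \<noteq> 0"
    proof -
      have "norm (d * (of_nat (Suc 0) + \<xi>) + of_real x) \<ge> m0 * (real 0 + x)" using facts[OF x, of 0] by simp
      moreover have "d * (of_nat (Suc 0) + \<xi>) + of_real x = d * b" unfolding b_def xz by (simp add: algebra_simps)
      moreover have "m0 * x > 0" using m0 x1 by simp
      ultimately show ?thesis by auto
    qed
    have SA: "(A x) sums ((1 / d) * (Digamma b - Digamma a))"
      unfolding Aeq by (intro sums_mult Digamma_diff_sums an bn)
    have Dbx: "\<And>k. norm (D x k) \<le> (G * Eb) / (real k + x)^2"
    proof -
      fix k
      have "G * norm (ee (Suc k)) \<le> G * Eb" using G0 Eb(2) by (intro mult_left_mono) auto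
      hence "G * norm (ee (Suc k)) / (real k + x)^2 \<le> G * Eb / (real k + x)^2" by (intro divide_right_mono) auto
      thus "norm (D x k) \<le> (G * Eb) / (real k + x)^2" using Dbound[OF x, of k] by linarith
    qed
    have SD: "summable (D x)" by (rule sum_bound_sq(1)[OF x1(1) Dbx])
    have "(\<lambda>k. 1 / (w (Suc k) - of_real x) - 1 / (w (Suc k) + of_real x)) = (\<lambda>k. D x k + A x k)"
      unfolding D_def by simp
    hence Ssum: "(\<Sum>k. 1 / (w (Suc k) - of_real x) - 1 / (w (Suc k) + of_real x)) = (\<Sum>k. D x k) + (1 / d) * (Digamma b - Digamma a)"
      using suminf_add[OF SD sums_summable[OF SA]] sums_unique[OF SA] by simp
    have uz: "z - \<xi> \<notin> \<int>"
    proof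
      assume "z - \<xi> \<in> \<int>"
      then obtain n :: int where "z - \<xi> = of_int n" by (auto elim: Ints_cases)
      hence "Im (z - \<xi>) = 0" by (metis Im_complex_of_real of_real_of_int_eq)
      moreover have "x * Im q \<ge> 2 * cm" using x1(2) q by (simp add: field_simps)
      moreover have "\<bar>Im \<xi>\<bar> \<le> norm \<xi>" by (rule abs_Im_le_cmod)
      ultimately show False unfolding z_def cm_def by simp
    qed
    have refl: "Digamma a = Digamma (z - \<xi>) + of_real pi * cot (of_real pi * (z - \<xi>))"
      using Digamma_reflection[OF uz] unfolding a_def by (simp add: algebra_simps)
    have bz: "b = z + 1 + \<xi>" unfolding b_def by (simp add: algebra_simps)
    show ?thesis
      unfolding Ssum refl bz z_def[symmetric] using d0 q_def
      by (simp add: algebra_simps q_def z_def)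
  qed
  have lim: "((\<lambda>x. of_real x * (\<Sum>k. D x k) + (of_real x * q) * (Digamma (of_real x * q + 1 + \<xi>) - Digamma (of_real x * q - \<xi>))
        - of_real pi * q * (of_real x * (cot (of_real pi * (of_real x * q - \<xi>)) + \<i>))) \<longlongrightarrow> 0 + (1 + 2 * \<xi>) - of_real pi * q * 0) at_top"
    by (intro tendsto_intros limD Digamma_asymp cot_limit q)
  have "((\<lambda>x. of_real x * (\<Sum>k. 1 / (w (Suc k) - of_real x) - 1 / (w (Suc k) + of_real x)) - of_real x * (\<i> * of_real pi / d))
          \<longlongrightarrow> 1 + 2 * \<xi>) at_top"
  proof (rule Lim_transform_eventually)
    show "((\<lambda>x. of_real x * (\<Sum>k. D x k) + (of_real x * q) * (Digamma (of_real x * q + 1 + \<xi>) - Digamma (of_real x * q - \<xi>))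
        - of_real pi * q * (of_real x * (cot (of_real pi * (of_real x * q - \<xi>)) + \<i>))) \<longlongrightarrow> 1 + 2 * \<xi>) at_top"
      using lim by simp
    show "eventually (\<lambda>x. of_real x * (\<Sum>k. D x k) + (of_real x * q) * (Digamma (of_real x * q + 1 + \<xi>) - Digamma (of_real x * q - \<xi>))
        - of_real pi * q * (of_real x * (cot (of_real pi * (of_real x * q - \<xi>)) + \<i>)) =
        of_real x * (\<Sum>k. 1 / (w (Suc k) - of_real x) - 1 / (w (Suc k) + of_real x)) - of_real x * (\<i> * of_real pi / d)) at_top"
      by (rule eventually_mono[OF eventually_ge_at_top[of X0]]) (rule model[symmetric])
  qed
  thus ?thesis by (simp add: algebra_simps)
qed

lemma sinh_of_real': "sinh (complex_of_real y) = of_real (sinh y)"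
  by (simp add: sinh_field_def exp_of_real flip: of_real_minus)

lemma cosh_of_real': "cosh (complex_of_real y) = of_real (cosh y)"
  by (simp add: cosh_field_def exp_of_real flip: of_real_minus)

lemma prod_logderiv:
  fixes a :: "nat \<Rightarrow> complex" and z0 :: complex
  assumes summ: "summable (\<lambda>k. 1 / norm (a k)^2)"
    and nz: "\<And>k. a k \<noteq> 0"
    and nz2: "\<And>k. 1 - (z0 / a k)^2 \<noteq> 0"
  defines "P \<equiv> (\<lambda>z. \<Prod>k. (1 - (z / a k)^2))"
  shows "P holomorphic_on ball z0 1" "P z0 \<noteq> 0"
    "(\<lambda>k. -(1 / (a k - z0) - 1 / (a k + z0))) sums (deriv P z0 / P z0)"
proof -
  define f where "f = (\<lambda>k z. 1 - (z / a k)^2)"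
  define K where "K = cball z0 1"
  define B where "B = (norm z0 + 1)^2"
  have bnd: "norm (f k z - 1) \<le> B * (1 / norm (a k)^2)" if "z \<in> K" for k z
  proof -
    have "norm z \<le> norm z0 + 1" using that unfolding K_def
      by (metis add.commute dist_norm mem_cball norm_minus_commute norm_triangle_sub order_trans add_le_cancel_left)
    hence "norm z ^ 2 \<le> B" unfolding B_def by (intro power_mono) auto
    thus ?thesis by (simp add: f_def norm_divide norm_power power_divide divide_right_mono)
  qed
  have uc: "uniformly_convergent_on K (\<lambda>N z. \<Prod>n<N. f n z)"
  proof (rule uniformly_convergent_on_prod')
    show "uniformly_convergent_on K (\<lambda>N z. \<Sum>n<N. norm (f n z - 1))"
      by (rule Weierstrass_m_test'[where M="\<lambda>k. B * (1 / norm (a k)^2)"])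
         (use bnd summable_mult[OF summ, of B] in auto)
  qed (auto simp: K_def f_def intro!: continuous_intros nz)
  then obtain g where g: "uniform_limit K (\<lambda>N z. \<Prod>n<N. f n z) g sequentially"
    unfolding uniformly_convergent_on_def by blast
  have conv: "convergent_prod (\<lambda>k. f k z)" for z
  proof -
    have "summable (\<lambda>k. norm (f k z - 1))"
      by (rule summable_comparison_test[OF _ summable_mult[OF summ, of "norm z ^ 2"]])
         (auto simp: f_def norm_divide norm_power power_divide)
    thus ?thesis by (intro abs_convergent_prod_imp_convergent_prod summable_imp_abs_convergent_prod)
  qed
  have gP: "g z = P z" if "z \<in> K" for z
  proof -
    have "(\<lambda>N. \<Prod>n<N. f n z) \<longlonglongrightarrow> g z"
      using tendsto_uniform_limitI[OF g that] .
    moreover have "(\<lambda>N. \<Prod>n<Suc N. f n z) \<longlonglongrightarrow> P z"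
      using convergent_prod_LIMSEQ[OF conv[of z]] unfolding P_def f_def lessThan_Suc_atMost .
    hence "(\<lambda>N. \<Prod>n<N. f n z) \<longlonglongrightarrow> P z" by (rule LIMSEQ_imp_Suc)
    ultimately show ?thesis using LIMSEQ_unique by blast
  qed
  have ulK: "uniform_limit K (\<lambda>N z. \<Prod>n<N. f n z) P sequentially"
    using g by (subst (asm) uniform_limit_cong'[OF refl gP]) auto
  hence ul: "uniform_limit (ball z0 1) (\<lambda>N z. \<Prod>n<N. f n z) P sequentially"
    by (rule uniform_limit_on_subset) (auto simp: K_def)
  show holo: "P holomorphic_on ball z0 1"
    by (rule holomorphic_uniform_limit[OF _ ulK[unfolded K_def]])
       (auto simp: f_def intro!: always_eventually continuous_intros holomorphic_intros nz)
  show nzP: "P z0 \<noteq> 0"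
    unfolding P_def using prodinf_nonzero[OF conv[of z0]] nz2 by (auto simp: f_def)
  have "(\<lambda>k. deriv (f k) z0 / f k z0) sums (deriv P z0 / P z0)"
    by (rule logderiv_prodinf_complex_uniform_limit[OF ul])
       (auto simp: f_def nzP intro!: holomorphic_intros nz)
  moreover have "deriv (f k) z0 / f k z0 = -(1 / (a k - z0) - 1 / (a k + z0))" for k
  proof -
    have "deriv (f k) z0 = - (2 * z0 / (a k)^2)"
      unfolding f_def by (rule DERIV_imp_deriv) (auto intro!: derivative_eq_intros simp: power2_eq_square field_simps nz)
    moreover have "a k - z0 \<noteq> 0" "a k + z0 \<noteq> 0"
    proof -
      show "a k - z0 \<noteq> 0"
      proof
        assume "a k - z0 = 0" hence "z0 = a k" by simp
        thus False using nz2[of k] nz[of k] by simp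
      qed
      show "a k + z0 \<noteq> 0"
      proof
        assume "a k + z0 = 0" hence "z0 = - a k" by (simp add: eq_neg_iff_add_eq_0 add.commute)
        thus False using nz2[of k] nz[of k] by (simp add: power2_eq_square)
      qed
    qed
    ultimately show ?thesis using nz[of k] nz2[of k]
      by (simp add: f_def field_simps power2_eq_square)
  qed
  ultimately show "(\<lambda>k. -(1 / (a k - z0) - 1 / (a k + z0))) sums (deriv P z0 / P z0)" by simp
qed

lemma nonreal_factor_nz:
  fixes a :: complex and x :: real
  assumes "Im a \<noteq> 0"
  shows "1 - (of_real x / a)^2 \<noteq> 0"
proof
  assume h: "1 - (of_real x / a)^2 = 0"
  have a0: "a \<noteq> 0" using assms by auto
  from h have "(of_real x)^2 = a^2" using a0 by (simp add: field_simps power2_eq_square)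
  hence "of_real x = a \<or> of_real x = - a" by (simp add: power2_eq_iff)
  hence "Im a = 0" by (auto dest: arg_cong[where f=Im])
  thus False using assms by auto
qed

lemma alg_aux:
  fixes Q s \<mu> c b S :: complex
  assumes "Q \<noteq> 0" "s \<noteq> 0" "\<mu> \<noteq> 0"
  shows "((\<mu> * (c * (b / 2)) * Q - \<mu> * s * (Q * S)) / (Q * Q)) / (\<mu> * s / Q) = b / 2 * (c / s) - S"
  using assms by (simp add: field_simps)

lemma rho_logderiv:
  fixes w :: "nat \<Rightarrow> nat \<Rightarrow> complex" and x \<beta> :: real and \<mu> :: complex
  assumes summ: "\<And>j. j < M \<Longrightarrow> summable (\<lambda>k. 1 / norm (w (Suc k) j)^2)"
    and nr: "\<And>k j. j < M \<Longrightarrow> Im (w (Suc k) j) \<noteq> 0"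
    and x: "x > 0" and beta: "\<beta> > 0" and mu: "\<mu> \<noteq> 0"
  shows "deriv (rho_fun \<mu> \<beta> w M) (of_real x) / rho_fun \<mu> \<beta> w M (of_real x) =
     of_real \<beta> / 2 * (cosh (of_real (\<beta> * x / 2)) / sinh (of_real (\<beta> * x / 2)))
     + (\<Sum>j<M. \<Sum>k. (1 / (w (Suc k) j - of_real x) - 1 / (w (Suc k) j + of_real x)))"
proof -
  define P where "P = (\<lambda>j z. \<Prod>k. (1 - (z / w (Suc k) j)^2))"
  define z0 where "z0 = (of_real x :: complex)"
  have nz: "w (Suc k) j \<noteq> 0" if "j < M" for j k using nr[OF that, of k] by auto
  have facts: "P j holomorphic_on ball z0 1 \<and> P j z0 \<noteq> 0 \<and>
      (\<lambda>k. -(1 / (w (Suc k) j - z0) - 1 / (w (Suc k) j + z0))) sums (deriv (P j) z0 / P j z0)"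
    if j: "j < M" for j
    using prod_logderiv[of "\<lambda>k. w (Suc k) j" "of_real x", OF summ[OF j] nz[OF j] nonreal_factor_nz[OF nr[OF j]]]
    unfolding P_def z0_def by auto
  have dP: "(P j has_field_derivative deriv (P j) z0) (at z0)" if "j < M" for j
    using facts[OF that] by (intro holomorphic_derivI[of _ "ball z0 1"]) auto
  have bp: "branch_prod w M = (\<lambda>z. \<Prod>j\<in>{..<M}. P j z)"
    by (auto simp: branch_prod_def P_def)
  have Q: "(branch_prod w M has_field_derivative
            (branch_prod w M z0 * (\<Sum>j\<in>{..<M}. deriv (P j) z0 / P j z0))) (at z0)"
    unfolding bp by (rule has_field_derivative_prod') (use facts dP in auto)
  define Qv where "Qv = branch_prod w M z0"
  define Sm where "Sm = (\<Sum>j\<in>{..<M}. deriv (P j) z0 / P j z0)"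
  have Qnz: "Qv \<noteq> 0" unfolding Qv_def bp using facts by auto
  have sh: "sinh (of_real \<beta> * z0 / 2) \<noteq> 0"
  proof -
    have "sinh (of_real \<beta> * z0 / 2) = of_real (sinh (\<beta> * x / 2))"
      using sinh_of_real'[of "\<beta> * x / 2"] by (simp add: z0_def)
    moreover have "sinh (\<beta> * x / 2) > 0" using x beta by simp
    ultimately show ?thesis using x beta by simp
  qed
  have rf: "rho_fun \<mu> \<beta> w M = (\<lambda>z. \<mu> * sinh (of_real \<beta> * z / 2) / branch_prod w M z)"
    by (auto simp: rho_fun_def)
  have D: "(rho_fun \<mu> \<beta> w M has_field_derivative
     ((\<mu> * (cosh (of_real \<beta> * z0 / 2) * (of_real \<beta> / 2)) * Qv - \<mu> * sinh (of_real \<beta> * z0 / 2) * (Qv * Sm)) / (Qv * Qv))) (at z0)"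
    unfolding rf Qv_def Sm_def
    by (rule derivative_eq_intros Q refl | use Qnz in \<open>simp add: Qv_def\<close>)+
  hence "deriv (rho_fun \<mu> \<beta> w M) z0 = ((\<mu> * (cosh (of_real \<beta> * z0 / 2) * (of_real \<beta> / 2)) * Qv - \<mu> * sinh (of_real \<beta> * z0 / 2) * (Qv * Sm)) / (Qv * Qv))"
    by (rule DERIV_imp_deriv)
  hence "deriv (rho_fun \<mu> \<beta> w M) z0 / rho_fun \<mu> \<beta> w M z0 =
      of_real \<beta> / 2 * (cosh (of_real \<beta> * z0 / 2) / sinh (of_real \<beta> * z0 / 2)) - Sm"
    unfolding rho_fun_def Qv_def[symmetric] using alg_aux[OF Qnz sh mu] by simp
  moreover have "Sm = (\<Sum>j<M. - (\<Sum>k. (1 / (w (Suc k) j - z0) - 1 / (w (Suc k) j + z0))))"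
    unfolding Sm_def
  proof (rule sum.cong)
    fix j assume "j \<in> {..<M}"
    hence "(\<lambda>k. -(1 / (w (Suc k) j - z0) - 1 / (w (Suc k) j + z0))) sums (deriv (P j) z0 / P j z0)"
      using facts by auto
    hence "(\<lambda>k. - (-(1 / (w (Suc k) j - z0) - 1 / (w (Suc k) j + z0)))) sums (- (deriv (P j) z0 / P j z0))"
      by (rule sums_minus)
    hence "(\<lambda>k. (1 / (w (Suc k) j - z0) - 1 / (w (Suc k) j + z0))) sums (- (deriv (P j) z0 / P j z0))"
      by simp
    thus "deriv (P j) z0 / P j z0 = - (\<Sum>k. (1 / (w (Suc k) j - z0) - 1 / (w (Suc k) j + z0)))"
      by (simp add: sums_iff)
  qed auto
  moreover have "of_real \<beta> * z0 / 2 = of_real (\<beta> * x / 2)" by (simp add: z0_def)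
  ultimately show ?thesis by (simp add: z0_def sum_negf)
qed

lemma lin_aux:
  fixes P a w B :: real
  shows "P + a \<le> w + B \<Longrightarrow> 2 * B \<le> P \<Longrightarrow> 0 < a \<Longrightarrow> P + a \<le> 2 * w"
  by linarith

lemma lin_aux2:
  fixes X Y :: real
  shows "X \<le> 2 * Y \<Longrightarrow> X / 2 \<le> Y"
  by linarith

lemma summable_inv_sq_branch:
  fixes w :: "nat \<Rightarrow> complex" and d \<xi> :: complex
  assumes d: "d \<noteq> 0"
    and e: "(\<lambda>m. w m - d * (of_nat m + \<xi>)) \<longlonglongrightarrow> 0"
  shows "summable (\<lambda>k. 1 / norm (w (Suc k))^2)"
proof -
  define ee where "ee = (\<lambda>m. w m - d * (of_nat m + \<xi>))"
  from e have "Bseq ee" unfolding ee_def by (rule convergent_imp_Bseq[OF convergentI])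
  then obtain Eb where Eb: "Eb > 0" "\<And>k. norm (ee k) \<le> Eb" by (auto simp: Bseq_def)
  define M1 where "M1 = nat \<lceil>2 * (norm d * norm \<xi> + Eb) / norm d\<rceil>"
  have nd: "norm d > 0" using d by simp
  have bnd: "norm (1 / norm (w (Suc k))^2) \<le> (4 / norm d ^ 2) * (1 / (real k + 1)^2)" if k: "k \<ge> M1" for k
  proof -
    have "real k \<ge> 2 * (norm d * norm \<xi> + Eb) / norm d" using k unfolding M1_def by linarith
    hence kk: "norm d * real k \<ge> 2 * (norm d * norm \<xi> + Eb)" using nd by (simp add: field_simps)
    have wv: "w (Suc k) = d * (of_nat (Suc k)) + (d * \<xi> + ee (Suc k))" unfolding ee_def by (simp add: algebra_simps)
    have "norm (d * (of_nat (Suc k))) - norm (d * \<xi> + ee (Suc k)) \<le> norm (w (Suc k))"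
      unfolding wv by (rule norm_diff_ineq)
    moreover have "norm (d * \<xi> + ee (Suc k)) \<le> norm d * norm \<xi> + Eb"
      using norm_triangle_ineq[of "d * \<xi>" "ee (Suc k)"] Eb(2)[of "Suc k"] by (simp add: norm_mult)
    moreover have "norm (d * (of_nat (Suc k))) = norm d * (real k + 1)"
      by (simp only: norm_mult norm_of_nat) simp
    ultimately have h1: "norm d * (real k + 1) \<le> norm (w (Suc k)) + (norm d * norm \<xi> + Eb)" by linarith
    have A: "norm d * (real k + 1) = norm d * real k + norm d" by (simp add: algebra_simps)
    have "norm d * real k + norm d \<le> 2 * norm (w (Suc k))"
      by (rule lin_aux[OF h1[unfolded A] kk nd])
    hence wl: "norm (w (Suc k)) \<ge> norm d * (real k + 1) / 2" unfolding A by (rule lin_aux2)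
    have pos: "norm d * (real k + 1) / 2 > 0" using nd by simp
    have "(norm d * (real k + 1) / 2)^2 \<le> norm (w (Suc k))^2"
      using wl pos by (intro power_mono) auto
    hence "1 / norm (w (Suc k))^2 \<le> 1 / (norm d * (real k + 1) / 2)^2"
      using pos by (intro divide_left_mono) (auto intro!: mult_pos_pos)
    also have "1 / (norm d * (real k + 1) / 2)^2 = (4 / norm d ^ 2) * (1 / (real k + 1)^2)"
      by (simp add: power_mult_distrib power_divide)
    finally show ?thesis by simp
  qed
  have "summable (\<lambda>k. (4 / norm d ^ 2) * (1 / (real k + 1)^2))"
    by (intro summable_mult sum_inv_sq(1)) simp
  thus ?thesis
    by (rule summable_comparison_test_ev[rotated]) (rule eventually_mono[OF eventually_ge_at_top[of M1] bnd])
qed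

theorem mainTheorem9:
  fixes w :: "nat \<Rightarrow> nat \<Rightarrow> complex" and d \<xi> :: "nat \<Rightarrow> complex"
    and M :: nat and \<epsilon> \<beta> s :: real and \<mu> :: complex
  assumes M: "M \<ge> 1"
    and nonzero: "\<And>m j. m \<ge> 1 \<Longrightarrow> j < M \<Longrightarrow> w m j \<noteq> 0"
    and nonreal: "\<And>m j. m \<ge> 1 \<Longrightarrow> j < M \<Longrightarrow> Im (w m j) \<noteq> 0"
    and disjoint: "inj_on (\<lambda>(m, j). w m j) ({1..} \<times> {..<M})"
    and eps: "\<epsilon> > 0"
    and asym: "\<And>j. j < M \<Longrightarrow>
        (\<lambda>m. norm (w m j - d j * (of_nat m + \<xi> j))) \<in> O[at_top](\<lambda>m. real m powr (- \<epsilon>))"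
    and d_im: "\<And>j. j < M \<Longrightarrow> Im (d j) < 0"
    and beta: "\<beta> > 0"
    and mu: "\<mu> \<noteq> 0"
    and logderiv: "(\<lambda>x::real. deriv (rho_fun \<mu> \<beta> w M) (of_real x) / rho_fun \<mu> \<beta> w M (of_real x)
                       - of_real s / of_real x) \<in> o[at_top](\<lambda>x. 1 / complex_of_real x)"
  shows "- \<i> * (\<Sum>j<M. 1 / d j) = of_real (\<beta> / (2 * pi)) \<and>
         (\<Sum>j<M. 1 + 2 * \<xi> j) = of_real s"
proof -
  define L where "L = (\<lambda>x::real. deriv (rho_fun \<mu> \<beta> w M) (of_real x) / rho_fun \<mu> \<beta> w M (of_real x))"
  define S where "S = (\<lambda>j x. \<Sum>k. (1 / (w (Suc k) j - of_real x) - 1 / (w (Suc k) j + of_real x)))"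
  define ct where "ct = (\<lambda>x::real. cosh (\<beta> * x / 2) / sinh (\<beta> * x / 2))"
  have e: "(\<lambda>m. w m j - d j * (of_nat m + \<xi> j)) \<longlonglongrightarrow> 0" if j: "j < M" for j
  proof -
    from asym[OF j] obtain c where c: "c > 0"
      "eventually (\<lambda>m. norm (norm (w m j - d j * (of_nat m + \<xi> j))) \<le> c * norm (real m powr (- \<epsilon>))) at_top"
      by (elim landau_o.bigE)
    have "((\<lambda>m::nat. real m powr (- \<epsilon>)) \<longlongrightarrow> 0) at_top" using eps by real_asymp
    hence lim: "((\<lambda>m::nat. c * real m powr (- \<epsilon>)) \<longlongrightarrow> 0) at_top"
      using tendsto_mult_right_zero by blast
    have ev: "eventually (\<lambda>m. norm (w m j - d j * (of_nat m + \<xi> j)) \<le> c * real m powr (- \<epsilon>)) at_top"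
      using c(2) by (rule eventually_mono) simp
    have "((\<lambda>m. w m j - d j * (of_nat m + \<xi> j)) \<longlongrightarrow> 0) at_top"
      by (rule Lim_null_comparison[OF ev lim])
    thus ?thesis by simp
  qed
  have d0: "d j \<noteq> 0" if "j < M" for j using d_im[OF that] by auto
  have summ: "summable (\<lambda>k. 1 / norm (w (Suc k) j)^2)" if j: "j < M" for j
    by (rule summable_inv_sq_branch[OF d0[OF j] e[OF j]])
  have Lx: "L x = of_real \<beta> / 2 * of_real (ct x) + (\<Sum>j<M. S j x)" if x: "x > 0" for x
  proof -
    have nr: "Im (w (Suc k) j) \<noteq> 0" if "j < M" for k j using nonreal[of "Suc k" j] that by simp
    have R: "deriv (rho_fun \<mu> \<beta> w M) (of_real x) / rho_fun \<mu> \<beta> w M (of_real x) =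
     of_real \<beta> / 2 * (cosh (of_real (\<beta> * x / 2)) / sinh (of_real (\<beta> * x / 2)))
     + (\<Sum>j<M. \<Sum>k. (1 / (w (Suc k) j - of_real x) - 1 / (w (Suc k) j + of_real x)))"
      by (rule rho_logderiv[OF summ nr x beta mu])
    have c: "cosh (complex_of_real (\<beta> * x / 2)) / sinh (complex_of_real (\<beta> * x / 2)) = of_real (ct x)"
      unfolding ct_def cosh_of_real' sinh_of_real' by simp
    show ?thesis unfolding L_def S_def R c ..
  qed
  have brj: "((\<lambda>x::real. of_real x * (S j x - \<i> * of_real pi / d j)) \<longlongrightarrow> 1 + 2 * \<xi> j) at_top"
    if j: "j < M" for j
    unfolding S_def by (rule branch_asymp[OF d_im[OF j] e[OF j]])
  define K where "K = of_real \<beta> / 2 + (\<Sum>j<M. \<i> * of_real pi / d j)"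
  define T where "T = (\<Sum>j<M. 1 + 2 * \<xi> j)"
  define F where "F = (\<lambda>x::real. of_real \<beta> / 2 * of_real (x * (ct x - 1)) + (\<Sum>j<M. of_real x * (S j x - \<i> * of_real pi / d j)))"
  have ctl: "((\<lambda>x. x * (ct x - 1)) \<longlongrightarrow> 0) at_top" unfolding ct_def using beta by real_asymp
  have Fl: "(F \<longlongrightarrow> of_real \<beta> / 2 * of_real 0 + T) at_top"
    unfolding F_def T_def by (intro tendsto_intros ctl brj) auto
  have xL: "eventually (\<lambda>x. of_real x * L x = F x + of_real x * K) at_top"
  proof (rule eventually_mono[OF eventually_gt_at_top[of 0]])
    fix x :: real assume x: "x > 0"
    have s1: "(\<Sum>j<M. of_real x * (S j x - \<i> * of_real pi / d j)) =
        of_real x * (\<Sum>j<M. S j x) - of_real x * (\<Sum>j<M. \<i> * of_real pi / d j)"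
      by (simp only: sum_subtractf sum_distrib_left right_diff_distrib)
    have s2: "complex_of_real (x * (ct x - 1)) = of_real x * of_real (ct x) - of_real x" by (simp add: right_diff_distrib)
    show "of_real x * L x = F x + of_real x * K"
      unfolding Lx[OF x] F_def K_def s1 s2 by (simp add: algebra_simps)
  qed
  have sm: "((\<lambda>x. (L x - of_real s / of_real x) / (1 / of_real x)) \<longlongrightarrow> 0) at_top"
    using smalloD_tendsto[OF logderiv] unfolding L_def .
  have xLl: "((\<lambda>x. of_real x * L x) \<longlongrightarrow> of_real s) at_top"
  proof -
    have "((\<lambda>x. (L x - of_real s / of_real x) / (1 / of_real x) + of_real s) \<longlongrightarrow> 0 + of_real s) at_top"
      by (intro tendsto_intros sm)
    moreover have "eventually (\<lambda>x. (L x - of_real s / of_real x) / (1 / of_real x) + of_real s = of_real x * L x) at_top"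
      by (rule eventually_mono[OF eventually_gt_at_top[of 0]]) (simp add: field_simps)
    ultimately show ?thesis by (simp add: Lim_transform_eventually)
  qed
  have inv0: "((\<lambda>x::real. 1 / complex_of_real x) \<longlongrightarrow> 0) at_top"
  proof -
    have "((\<lambda>x::real. 1 / x) \<longlongrightarrow> 0) at_top" by real_asymp
    from tendsto_of_real[OF this, where 'a=complex] show ?thesis by simp
  qed
  have Kz: "K = 0"
  proof -
    have "((\<lambda>x. (of_real x * L x - F x) * (1 / of_real x)) \<longlongrightarrow> (of_real s - (of_real \<beta> / 2 * of_real 0 + T)) * 0) at_top"
      by (intro tendsto_intros xLl Fl inv0)
    hence l1: "((\<lambda>x. (of_real x * L x - F x) * (1 / of_real x)) \<longlongrightarrow> 0) at_top" by simp
    have "eventually (\<lambda>x. (of_real x * L x - F x) * (1 / of_real x) = K) at_top"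
      using eventually_conj[OF xL eventually_gt_at_top[of 0]] by (rule eventually_mono) simp
    note ev = this
    have "((\<lambda>x::real. K) \<longlongrightarrow> 0) at_top"
    proof (rule Lim_transform_eventually[OF l1])
      show "eventually (\<lambda>x. (of_real x * L x - F x) * (1 / of_real x) = K) at_top" by (rule ev)
    qed
    thus ?thesis by (simp add: tendsto_const_iff)
  qed
  have "(F \<longlongrightarrow> of_real s) at_top"
  proof (rule Lim_transform_eventually[OF xLl])
    show "eventually (\<lambda>x. of_real x * L x = F x) at_top" using xL by (rule eventually_mono) (simp add: Kz)
  qed
  hence Ts: "T = of_real s" using tendsto_unique[OF _ Fl] by simp
  have "- \<i> * (\<Sum>j<M. 1 / d j) = of_real (\<beta> / (2 * pi))"
  proof -
    define X where "X = (\<Sum>j<M. 1 / d j)"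
    have sx: "(\<Sum>j<M. \<i> * of_real pi / d j) = \<i> * of_real pi * X"
      unfolding X_def by (simp add: sum_distrib_left)
    have h0: "of_real \<beta> / 2 + \<i> * of_real pi * X = 0"
      using Kz unfolding K_def sx .
    hence h1: "- (of_real \<beta> / 2) = \<i> * of_real pi * X" by (simp only: neg_eq_iff_add_eq_0)
    have "of_real pi * (- \<i> * X) = - (\<i> * of_real pi * X)" by (simp add: algebra_simps)
    also have "\<dots> = of_real \<beta> / 2" unfolding h1[symmetric] by simp
    finally have h2: "of_real pi * (- \<i> * X) = of_real \<beta> / 2" .
    have "- \<i> * X = (of_real pi * (- \<i> * X)) / of_real pi" by simp
    also have "\<dots> = of_real \<beta> / 2 / of_real pi" unfolding h2 ..
    also have "\<dots> = of_real (\<beta> / (2 * pi))" by simp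
    finally show ?thesis unfolding X_def .
  qed
  thus ?thesis using Ts unfolding T_def by simp
qed

end
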